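(* Let $\nu\in(0,1]$ and $\alpha\in(0,2]$. Then $$L_{\alpha,\nu}\stackrel{d}{=}\Lambda\cdot Z_{\nu,1}^{-1/\alpha}\cdot\sqrt{R_{\alpha/2}},$$ where $\Lambda$, $Z_{\nu,1}$, $R_{\alpha/2}$ are independent.
   Context: $\stackrel{d}{=}$ denotes equality in distribution. $\Lambda$ is a random variable with the Laplace density $\tfrac12e^{-|x|}$, $x\in\mathbb{R}$. For $\alpha\in(0,2]$, $\nu>0$, $L_{\alpha,\nu}$ denotes a random variable with characteristic function $(1+|t|^{\alpha})^{-\nu}$. For $\delta\in(0,1]$, $S_{\delta,1}$ denotes a one-sided strictly stable random variable with Laplace transform $\mathsf{E}e^{-sS_{\delta,1}}=e^{-s^\delta}$, $s\ge0$ (with $S_{1,1}\equiv1$), and $R_\delta=S_{\delta,1}/S'_{\delta,1}$ where $S_{\delta,1},S'_{\delta,1}$ are independent copies; for $\delta<1$ its density is $\frac{\sin(\pi\delta)x^{\delta-1}}{\pi[1+x^{2\delta}+2x^\delta\cos(\pi\delta)]}$, $x>0$. For $r\in(0,1)$, $Z_{r,1}=(G_{r,1}+G_{1-r,1})/G_{r,1}$ with $G_{r,1},G_{1-r,1}$ independent gamma random variables of shapes $r,1-r$ and unit scale; $Z_{1,1}\equiv1$. *)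

theory Defs
  imports "HOL-Probability.Probability"
begin

definition laplace_density :: "real \<Rightarrow> ennreal" where
  "laplace_density x = ennreal (exp (- \<bar>x\<bar>) / 2)"

definition gamma_dist :: "real \<Rightarrow> real measure" where
  "gamma_dist r = density lborel
     (\<lambda>x. if 0 < x then ennreal (x powr (r - 1) * exp (- x) / Gamma r) else 0)"

definition Z_dist :: "real \<Rightarrow> real measure" where
  "Z_dist r = (if r = 1 then return borel 1
     else distr (gamma_dist r \<Otimes>\<^sub>M gamma_dist (1 - r)) borel
            (\<lambda>(g1, g2). (g1 + g2) / g1))"

definition one_sided_stable :: "real \<Rightarrow> real measure \<Rightarrow> bool" where
  "one_sided_stable \<delta> \<mu> \<longleftrightarrow> prob_space \<mu> \<and> sets \<mu> = sets borel \<and>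
     (AE x in \<mu>. 0 \<le> x) \<and>
     (\<forall>s\<ge>0. (\<integral>x. exp (- (s * x)) \<partial>\<mu>) = exp (- (s powr \<delta>)))"

definition R_dist :: "real measure \<Rightarrow> real measure" where
  "R_dist \<mu> = distr (\<mu> \<Otimes>\<^sub>M \<mu>) borel (\<lambda>(x, y). x / y)"


end

theory Submission
  imports Defs
begin

lemma nn_FTC_einterval:
  fixes F f :: "real \<Rightarrow> real" and a b :: ereal
  assumes ab: "a < b"
    and F: "\<And>x. a < ereal x \<Longrightarrow> ereal x < b \<Longrightarrow> DERIV F x :> f x"
    and f: "\<And>x. a < ereal x \<Longrightarrow> ereal x < b \<Longrightarrow> isCont f x"
    and nn: "\<And>x. a < ereal x \<Longrightarrow> ereal x < b \<Longrightarrow> 0 \<le> f x"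
    and A: "((F \<circ> real_of_ereal) \<longlongrightarrow> A) (at_right a)"
    and B: "((F \<circ> real_of_ereal) \<longlongrightarrow> B) (at_left b)"
  shows "(\<integral>\<^sup>+x. ennreal (f x) * indicator (einterval a b) x \<partial>lborel) = ennreal (B - A)"
proof -
  have nn': "AE x in lborel. a < ereal x \<longrightarrow> ereal x < b \<longrightarrow> 0 \<le> f x"
    using nn by auto
  note r = interval_integral_FTC_nonneg[OF ab F f nn' A B]
  have "(\<integral>\<^sup>+x. ennreal (f x) * indicator (einterval a b) x \<partial>lborel)
      = (\<integral>\<^sup>+x. ennreal (indicator (einterval a b) x * f x) \<partial>lborel)"
    by (intro nn_integral_cong) (auto split: split_indicator)
  also have "\<dots> = ennreal (LINT x|lborel. indicator (einterval a b) x * f x)"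
    using r(1) nn unfolding set_integrable_def
    by (intro nn_integral_eq_integral) (auto split: split_indicator simp: einterval_def)
  also have "(LINT x|lborel. indicator (einterval a b) x * f x) = B - A"
    using r(2) ab unfolding interval_lebesgue_integral_def set_lebesgue_integral_def by (simp add: less_imp_le)
  finally show ?thesis .
qed

lemma nn_FTC_Ioi:
  fixes F f :: "real \<Rightarrow> real" and a :: real
  assumes F: "\<And>x. a < x \<Longrightarrow> DERIV F x :> f x"
    and f: "\<And>x. a < x \<Longrightarrow> isCont f x"
    and nn: "\<And>x. a < x \<Longrightarrow> 0 \<le> f x"
    and A: "(F \<longlongrightarrow> A) (at_right a)"
    and B: "(F \<longlongrightarrow> B) at_top"
  shows "(\<integral>\<^sup>+x. ennreal (f x) * indicator {a<..} x \<partial>lborel) = ennreal (B - A)"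
proof -
  have "einterval (ereal a) \<infinity> = {a<..}" by (auto simp: einterval_def)
  moreover have "(\<integral>\<^sup>+x. ennreal (f x) * indicator (einterval (ereal a) \<infinity>) x \<partial>lborel) = ennreal (B - A)"
    by (rule nn_FTC_einterval) (use assms in \<open>auto simp: ereal_tendsto_simps\<close>)
  ultimately show ?thesis by simp
qed

lemma nn_FTC_Ioo:
  fixes F f :: "real \<Rightarrow> real" and a b :: real
  assumes ab: "a < b"
    and F: "\<And>x. a < x \<Longrightarrow> x < b \<Longrightarrow> DERIV F x :> f x"
    and f: "\<And>x. a < x \<Longrightarrow> x < b \<Longrightarrow> isCont f x"
    and nn: "\<And>x. a < x \<Longrightarrow> x < b \<Longrightarrow> 0 \<le> f x"
    and A: "(F \<longlongrightarrow> A) (at_right a)"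
    and B: "(F \<longlongrightarrow> B) (at_left b)"
  shows "(\<integral>\<^sup>+x. ennreal (f x) * indicator {a<..<b} x \<partial>lborel) = ennreal (B - A)"
proof -
  have "einterval (ereal a) (ereal b) = {a<..<b}" by (auto simp: einterval_def)
  moreover have "(\<integral>\<^sup>+x. ennreal (f x) * indicator (einterval (ereal a) (ereal b)) x \<partial>lborel) = ennreal (B - A)"
    by (rule nn_FTC_einterval) (use assms in \<open>auto simp: ereal_tendsto_simps\<close>)
  ultimately show ?thesis by simp
qed

lemma gamma_nn:
  fixes a b :: real
  assumes a: "a > 0" and b: "b > 0"
  shows "(\<integral>\<^sup>+x. ennreal (x powr (a - 1) * exp (- (b * x))) * indicator {0<..} x \<partial>lborel)
          = ennreal (Gamma a * b powr (- a))"
proof -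
  define g where "g = (\<lambda>t::real. ennreal (indicator {0..} t * t powr (a - 1) / exp t))"
  have gm: "g \<in> borel_measurable borel" unfolding g_def by measurable
  define I where "I = (\<integral>\<^sup>+x. ennreal (x powr (a - 1) * exp (- (b * x))) * indicator {0<..} x \<partial>lborel)"
  have "ennreal (Gamma a) = integral\<^sup>N lborel g"
    unfolding g_def by (rule Gamma_conv_nn_integral_real[OF a])
  also have "\<dots> = ennreal b * (\<integral>\<^sup>+x. g (0 + b * x) \<partial>lborel)"
    using nn_integral_real_affine[OF gm, of b 0] b by simp
  also have "(\<integral>\<^sup>+x. g (0 + b * x) \<partial>lborel)
      = (\<integral>\<^sup>+x. ennreal (b powr (a - 1)) * (ennreal (x powr (a - 1) * exp (- (b * x))) * indicator {0<..} x) \<partial>lborel)"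
  proof (intro nn_integral_cong)
    fix x :: real
    show "g (0 + b * x) = ennreal (b powr (a - 1)) * (ennreal (x powr (a - 1) * exp (- (b * x))) * indicator {0<..} x)"
    proof (cases "x > 0")
      case True
      then show ?thesis using b
        by (simp add: g_def indicator_def powr_mult ennreal_mult'[symmetric] exp_minus field_simps)
    next
      case False
      then show ?thesis using b
        by (auto simp: g_def indicator_def zero_le_mult_iff)
    qed
  qed
  also have "\<dots> = ennreal (b powr (a - 1)) * I"
    unfolding I_def by (rule nn_integral_cmult) measurable
  finally have "ennreal (Gamma a) = ennreal (b * b powr (a - 1)) * I"
    using b by (simp add: ennreal_mult' mult.assoc)
  also have "b * b powr (a - 1) = b powr a"
    using b by (simp add: powr_diff powr_one)
  finally have *: "ennreal (Gamma a) = ennreal (b powr a) * I" .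
  have "ennreal (Gamma a * b powr (- a)) = ennreal (b powr (-a)) * ennreal (Gamma a)"
    using a by (simp add: ennreal_mult' Gamma_real_pos mult.commute less_imp_le)
  also have "\<dots> = ennreal (b powr (-a) * b powr a) * I"
    unfolding * using b by (simp add: ennreal_mult' mult.assoc)
  also have "b powr (-a) * b powr a = 1"
    using b by (simp add: powr_minus)
  finally show ?thesis unfolding I_def by simp
qed


lemma laplace_char:
  fixes s :: real
  assumes P: "prob_space (density lborel laplace_density)"
  shows "(CLINT x|density lborel laplace_density. iexp (s * x)) = complex_of_real (1 / (1 + s\<^sup>2))"
proof -
  define g where "g = (\<lambda>x::real. exp (- \<bar>x\<bar>) / 2)"
  have ld: "laplace_density = (\<lambda>x. ennreal (g x))"
    by (simp add: laplace_density_def g_def fun_eq_iff)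
  have gm: "g \<in> borel_measurable lborel" unfolding g_def by measurable
  have gnn: "AE x in lborel. 0 \<le> g x" unfolding g_def by simp
  have fm: "(\<lambda>x. iexp (s * x)) \<in> borel_measurable lborel" by measurable
  have "integrable (density lborel laplace_density) (\<lambda>x. iexp (s * x))"
  proof -
    interpret prob_space "density lborel laplace_density" by (rule P)
    show ?thesis
      by (rule integrable_const_bound[where B=1]) (auto simp: norm_exp_i_times)
  qed
  hence hi: "integrable lborel (\<lambda>x. g x *\<^sub>R iexp (s * x))"
    unfolding ld using integrable_density[OF fm gm gnn] by simp
  have eq1: "(CLINT x|density lborel laplace_density. iexp (s * x)) = (CLINT x|lborel. g x *\<^sub>R iexp (s * x))"
    unfolding ld by (rule integral_density[OF fm gm gnn])
  have ReI: "integrable lborel (\<lambda>x. g x * cos (s * x))"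
    using integrable_Re[OF hi] by (simp add: Re_exp)
  have ImI: "integrable lborel (\<lambda>x. g x * sin (s * x))"
    using integrable_Im[OF hi] by (simp add: Im_exp)
  have Re1: "Re (CLINT x|lborel. g x *\<^sub>R iexp (s * x)) = (LBINT x. g x * cos (s * x))"
    using integral_Re[OF hi] by (simp add: Re_exp)
  have Im1: "Im (CLINT x|lborel. g x *\<^sub>R iexp (s * x)) = (LBINT x. g x * sin (s * x))"
    using integral_Im[OF hi] by (simp add: Im_exp)
  have "(LBINT x. g x * sin (s * x)) = \<bar>-1\<bar> *\<^sub>R (LBINT x. g (0 + -1 * x) * sin (s * (0 + -1 * x)))"
    by (rule lborel_integral_real_affine) simp
  also have "\<dots> = - (LBINT x. g x * sin (s * x))"
    by (simp add: g_def)
  finally have Im0: "(LBINT x. g x * sin (s * x)) = 0" by simp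
  define k where "k = (\<lambda>x. g x * cos (s * x))"
  have kI: "integrable lborel k" using ReI unfolding k_def .
  have kind: "\<And>A. A \<in> sets lborel \<Longrightarrow> integrable lborel (\<lambda>x. indicator A x * k x)"
    using integrable_mult_indicator[OF _ kI] by simp
  have km[measurable]: "k \<in> borel_measurable borel" unfolding k_def g_def by measurable
  have "(LBINT x. k x) = (LBINT x. indicator {0<..} x * k x + indicator {..<0} x * k x)"
    by (intro integral_cong_AE) (use AE_lborel_singleton[of 0] in \<open>auto split: split_indicator\<close>, measurable)
  also have "\<dots> = (LBINT x. indicator {0<..} x * k x) + (LBINT x. indicator {..<0} x * k x)"
    by (rule Bochner_Integration.integral_add; rule kind) auto
  also have "(LBINT x. indicator {..<0} x * k x) = \<bar>-1\<bar> *\<^sub>R (LBINT x. indicator {..<0} (0 + -1 * x) * k (0 + -1 * x))"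
    by (rule lborel_integral_real_affine) simp
  also have "\<dots> = (LBINT x. indicator {0<..} x * k x)"
  proof -
    have "\<And>x. indicator {..<0} (0 + -1*x) * k (0 + -1*x) = indicator {0<..} x * (k x::real)"
      by (auto simp: k_def g_def split: split_indicator)
    then show ?thesis by simp
  qed
  finally have "(LBINT x. k x) = 2 * (LBINT x. indicator {0<..} x * k x)" by simp
  also have "\<dots> = (LBINT x. 2 * (indicator {0<..} x * k x))" by simp
  also have "\<dots> = (LBINT x. indicator {0<..} x * (exp (- x) * cos (s * x)))"
    by (intro Bochner_Integration.integral_cong) (auto simp: k_def g_def split: split_indicator)
  also have "\<dots> = 1 / (1 + s\<^sup>2)"
  proof -
    define f where "f = (\<lambda>x::real. exp (- x) * cos (s * x))"
    define F where "F = (\<lambda>x::real. exp (- x) * (s * sin (s * x) - cos (s * x)) / (1 + s\<^sup>2))"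
    have pos: "1 + s\<^sup>2 > 0" by (simp add: add_pos_nonneg)
    have "set_integrable lborel (einterval 0 \<infinity>) f"
    proof -
      have "integrable lborel (\<lambda>x. 2 * (indicator {0<..} x * k x))"
        by (intro integrable_mult_right kind) auto
      moreover have "einterval 0 \<infinity> = {0<..}" by (auto simp: einterval_def zero_ereal_def)
      moreover have "(\<lambda>x. 2 * (indicator {0<..} x * k x)) = (\<lambda>x. indicator {0<..} x *\<^sub>R f x)"
        by (auto simp: k_def g_def f_def fun_eq_iff split: split_indicator)
      ultimately show ?thesis unfolding set_integrable_def by simp
    qed
    have "(LBINT x=0..\<infinity>. f x) = 0 - (- 1 / (1 + s\<^sup>2))"
    proof (rule interval_integral_FTC_integrable)
      show "(0::ereal) < \<infinity>" by simp
      fix x assume "0 < ereal x" "ereal x < \<infinity>"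
      have "((\<lambda>x. exp (- x) * (s * sin (s * x) - cos (s * x))) has_real_derivative (1 + s\<^sup>2) * f x) (at x)"
        unfolding f_def by (auto intro!: derivative_eq_intros simp: algebra_simps power2_eq_square)
      from DERIV_cdivide[OF this, of "1 + s\<^sup>2"]
      show "(F has_vector_derivative f x) (at x)"
        unfolding has_real_derivative_iff_has_vector_derivative[symmetric] F_def
        using pos by simp
      show "isCont f x" unfolding f_def by (intro continuous_intros)
    next
      show "set_integrable lborel (einterval 0 \<infinity>) f" by fact
      have "((\<lambda>x. F x) \<longlongrightarrow> F 0) (at_right 0)"
        unfolding F_def by (intro tendsto_intros) (use pos in auto)
      then show "((F \<circ> real_of_ereal) \<longlongrightarrow> - 1 / (1 + s\<^sup>2)) (at_right 0)"
        unfolding zero_ereal_def ereal_tendsto_simps by (simp add: F_def)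
      have "(F \<longlongrightarrow> 0) at_top"
      proof (rule tendsto_0_le[where K = "(\<bar>s\<bar> + 1) / (1 + s\<^sup>2)"])
        show "((\<lambda>x::real. exp (- x)) \<longlongrightarrow> (0::real)) at_top"
          using filterlim_compose[OF exp_at_bot filterlim_uminus_at_bot_at_top] by simp
        show "\<forall>\<^sub>F x in at_top. norm (F x) \<le> norm (exp (- x)) * ((\<bar>s\<bar> + 1) / (1 + s\<^sup>2))"
        proof (intro always_eventually allI)
          fix x :: real
          have "\<bar>s * sin (s * x) - cos (s * x)\<bar> \<le> \<bar>s\<bar> + 1"
          proof -
            have "\<bar>s * sin (s * x)\<bar> \<le> \<bar>s\<bar>" by (simp add: abs_mult mult_left_le)
            moreover have "\<bar>cos (s * x)\<bar> \<le> 1" by simp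
            ultimately show ?thesis by linarith
          qed
          then show "norm (F x) \<le> norm (exp (- x)) * ((\<bar>s\<bar> + 1) / (1 + s\<^sup>2))"
            using pos unfolding F_def
            by (simp add: abs_mult divide_right_mono mult_left_mono)
        qed
      qed
      then show "((F \<circ> real_of_ereal) \<longlongrightarrow> 0) (at_left \<infinity>)"
        unfolding ereal_tendsto_simps .
    qed
    moreover have "(LBINT x=0..\<infinity>. f x) = (LBINT x. indicator {0<..} x * (exp (- x) * cos (s * x)))"
      unfolding interval_lebesgue_integral_def set_lebesgue_integral_def
      by (simp add: einterval_def zero_ereal_def f_def greaterThan_def)
    ultimately show ?thesis by simp
  qed
  finally have Re0: "(LBINT x. g x * cos (s * x)) = 1 / (1 + s\<^sup>2)" unfolding k_def .
  show ?thesis unfolding eq1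
    by (rule complex_eqI, subst Re1, simp add: Re0, subst Im1, simp add: Im0)
qed


definition gd :: "real \<Rightarrow> real \<Rightarrow> ennreal" where
  "gd r x = (if 0 < x then ennreal (x powr (r - 1) * exp (- x) / Gamma r) else 0)"

lemma gd_measurable'[measurable]: "gd r \<in> borel_measurable borel"
  unfolding gd_def by measurable

lemma gamma_dist_gd: "gamma_dist r = density lborel (gd r)"
  unfolding gamma_dist_def gd_def by simp

lemma sigma_finite_gamma_dist: "sigma_finite_measure (gamma_dist r)"
  unfolding gamma_dist_gd
  by (subst sigma_finite_measure.sigma_finite_iff_density_finite[OF lborel.sigma_finite_measure_axioms]) (auto simp: gd_def)

lemma gam0:
  assumes r: "r > 0" and s: "s \<ge> 0"
  shows "(\<integral>\<^sup>+x. gd r x * ennreal (exp (- (s * x))) \<partial>lborel) = ennreal ((1 + s) powr (- r))"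
proof -
  have "(\<integral>\<^sup>+x. gd r x * ennreal (exp (- (s * x))) \<partial>lborel)
      = (\<integral>\<^sup>+x. ennreal (1 / Gamma r) * (ennreal (x powr (r - 1) * exp (- ((1 + s) * x))) * indicator {0<..} x) \<partial>lborel)"
    using r by (intro nn_integral_cong)
      (auto simp: gd_def ennreal_mult'[symmetric] Gamma_real_pos exp_add[symmetric] field_simps indicator_def)
  also have "\<dots> = ennreal (1 / Gamma r) * ennreal (Gamma r * (1 + s) powr (- r))"
    using r s gamma_nn[OF r, of "1 + s"] by (subst nn_integral_cmult) auto
  also have "\<dots> = ennreal ((1 + s) powr (- r))"
    using r Gamma_real_pos[OF r] by (simp add: ennreal_mult'[symmetric] less_imp_le less_imp_neq[symmetric])
  finally show ?thesis .
qed

lemma gam1: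
  assumes r: "r > 0" and s: "s \<ge> 0"
  shows "(\<integral>\<^sup>+x. gd r x * ennreal (x * exp (- (s * x))) \<partial>lborel) = ennreal (r * (1 + s) powr (- r - 1))"
proof -
  have "(\<integral>\<^sup>+x. gd r x * ennreal (x * exp (- (s * x))) \<partial>lborel)
      = (\<integral>\<^sup>+x. ennreal (1 / Gamma r) * (ennreal (x powr ((r + 1) - 1) * exp (- ((1 + s) * x))) * indicator {0<..} x) \<partial>lborel)"
  proof (intro nn_integral_cong)
    fix x :: real
    show "gd r x * ennreal (x * exp (- (s * x))) = ennreal (1 / Gamma r) * (ennreal (x powr ((r + 1) - 1) * exp (- ((1 + s) * x))) * indicator {0<..} x)"
    proof (cases "x > 0")
      case True
      then have "x powr ((r + 1) - 1) = x powr (r - 1) * x"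
        by (simp add: powr_diff)
      then show ?thesis using True r
        by (auto simp: gd_def ennreal_mult'[symmetric] Gamma_real_pos exp_add[symmetric] field_simps indicator_def)
    qed (auto simp: gd_def)
  qed
  also have "\<dots> = ennreal (1 / Gamma r) * ennreal (Gamma (r + 1) * (1 + s) powr (- (r + 1)))"
    using r s gamma_nn[of "r + 1" "1 + s"] by (subst nn_integral_cmult) auto
  also have "Gamma (r + 1) = r * Gamma r"
    using r by (subst Gamma_plus1) (auto simp: nonpos_Ints_def)
  also have "ennreal (1 / Gamma r) * ennreal (r * Gamma r * (1 + s) powr (- (r + 1))) = ennreal (r * (1 + s) powr (- r - 1))"
    using r Gamma_real_pos[OF r] by (simp add: ennreal_mult'[symmetric] less_imp_le less_imp_neq[symmetric])
  finally show ?thesis .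
qed

lemma exp_nn:
  fixes K C :: real
  assumes K: "K > 0" and C: "C \<ge> 0"
  shows "(\<integral>\<^sup>+l. ennreal (C * exp (- (l * K))) * indicator {0<..} l \<partial>lborel) = ennreal (C / K)"
proof -
  have "(\<integral>\<^sup>+l. ennreal (C * exp (- (l * K))) * indicator {0<..} l \<partial>lborel) = ennreal (0 - (- C / K))"
  proof (rule nn_FTC_Ioi[where F = "\<lambda>l. - C / K * exp (- (l * K))"])
    fix x :: real
    show "((\<lambda>l. - C / K * exp (- (l * K))) has_real_derivative C * exp (- (x * K))) (at x)"
      using K by (auto intro!: derivative_eq_intros)
    show "isCont (\<lambda>l. C * exp (- (l * K))) x" by (intro continuous_intros)
    show "0 \<le> C * exp (- (x * K))" using C by simp
  next
    have "((\<lambda>l. - C / K * exp (- (l * K))) \<longlongrightarrow> - C / K * exp (- (0 * K))) (at_right 0)"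
      by (intro tendsto_intros)
    then show "((\<lambda>l. - C / K * exp (- (l * K))) \<longlongrightarrow> - C / K) (at_right 0)" by simp
    have "filterlim (\<lambda>l. l * K) at_top at_top"
      by (rule filterlim_at_top_mult_tendsto_pos[OF tendsto_const K filterlim_ident])
    then have "((\<lambda>l. exp (- (l * K))) \<longlongrightarrow> 0) at_top"
      using filterlim_compose[OF exp_at_bot filterlim_compose[OF filterlim_uminus_at_bot_at_top]] by blast
    then show "((\<lambda>l. - C / K * exp (- (l * K))) \<longlongrightarrow> 0) at_top"
      using tendsto_mult[OF tendsto_const, of _ 0 at_top "- C / K"] by simp
  qed
  then show ?thesis by simp
qed


lemma Zftc:
  fixes \<nu> c :: real
  assumes nu: "0 < \<nu>" "\<nu> < 1" and c: "0 \<le> c"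
  shows "(\<integral>\<^sup>+l. ennreal (\<nu> * (1 + l * (1 + c)) powr (- \<nu> - 1) * (1 + l) powr (- (1 - \<nu>))
             + (1 + l * (1 + c)) powr (- \<nu>) * ((1 - \<nu>) * (1 + l) powr (- (1 - \<nu>) - 1)))
            * indicator {0<..} l \<partial>lborel) = ennreal ((1 + c) powr (- \<nu>))"
proof -
  define F where "F = (\<lambda>l::real. l * (1 + l) powr (\<nu> - 1) * (1 + l * (1 + c)) powr (- \<nu>))"
  have "(\<integral>\<^sup>+l. ennreal (\<nu> * (1 + l * (1 + c)) powr (- \<nu> - 1) * (1 + l) powr (- (1 - \<nu>))
             + (1 + l * (1 + c)) powr (- \<nu>) * ((1 - \<nu>) * (1 + l) powr (- (1 - \<nu>) - 1)))
            * indicator {0<..} l \<partial>lborel) = ennreal ((1 + c) powr (- \<nu>) - 0)"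
  proof (rule nn_FTC_Ioi[where F = F])
    fix x :: real assume x: "0 < x"
    define p where "p = 1 + x * (1 + c)"
    define q where "q = 1 + x"
    have p: "p > 0" and q: "q > 0" using x c by (auto simp: p_def q_def add_pos_nonneg)
    have "(F has_real_derivative
        q powr (\<nu> - 1) * p powr (- \<nu>)
        + x * ((\<nu> - 1) * q powr (\<nu> - 1 - 1)) * p powr (- \<nu>)
        + x * q powr (\<nu> - 1) * ((- \<nu>) * p powr (- \<nu> - 1) * (1 + c))) (at x)"
      unfolding F_def p_def q_def using p q
      by (auto intro!: derivative_eq_intros simp: p_def q_def algebra_simps)
    moreover have "q powr (\<nu> - 1) * p powr (- \<nu>)
        + x * ((\<nu> - 1) * q powr (\<nu> - 1 - 1)) * p powr (- \<nu>)
        + x * q powr (\<nu> - 1) * ((- \<nu>) * p powr (- \<nu> - 1) * (1 + c))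
      = \<nu> * p powr (- \<nu> - 1) * q powr (- (1 - \<nu>))
             + p powr (- \<nu>) * ((1 - \<nu>) * q powr (- (1 - \<nu>) - 1))"
    proof -
      have e1: "q powr (\<nu> - 1 - 1) = q powr (\<nu> - 1) / q" using q by (simp add: powr_diff power2_eq_square)
      have e2: "p powr (- \<nu> - 1) = p powr (- \<nu>) / p" using p by (simp add: powr_diff)
      have e3: "q powr (- (1 - \<nu>) - 1) = q powr (\<nu> - 1) / q" using q by (simp add: powr_diff power2_eq_square)
      have e4: "- (1 - \<nu>) = \<nu> - 1" by simp
      have key: "q * p + x * (\<nu> - 1) * p - x * \<nu> * (1 + c) * q = \<nu> * q + (1 - \<nu>) * p"
        unfolding p_def q_def by (simp add: algebra_simps)
      have gen: "Q * P + x * ((\<nu> - 1) * (Q / q)) * P + x * Q * ((- \<nu>) * (P / p) * (1 + c))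
          = \<nu> * (P / p) * Q + P * ((1 - \<nu>) * (Q / q))" for Q P
      proof -
        have "Q * P + x * ((\<nu> - 1) * (Q / q)) * P + x * Q * ((- \<nu>) * (P / p) * (1 + c))
            = Q * P * (q * p + x * (\<nu> - 1) * p - x * \<nu> * (1 + c) * q) / (p * q)"
          using p q by (simp add: field_simps)
        also have "\<dots> = Q * P * (\<nu> * q + (1 - \<nu>) * p) / (p * q)" by (simp only: key)
        also have "\<dots> = \<nu> * (P / p) * Q + P * ((1 - \<nu>) * (Q / q))"
          using p q by (simp add: field_simps)
        finally show ?thesis .
      qed
      show ?thesis unfolding e1 e2 e3 e4 by (rule gen)
    qed
    ultimately show "(F has_real_derivative \<nu> * (1 + x * (1 + c)) powr (- \<nu> - 1) * (1 + x) powr (- (1 - \<nu>))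
             + (1 + x * (1 + c)) powr (- \<nu>) * ((1 - \<nu>) * (1 + x) powr (- (1 - \<nu>) - 1))) (at x)"
      unfolding p_def q_def by simp
    show "isCont (\<lambda>l. \<nu> * (1 + l * (1 + c)) powr (- \<nu> - 1) * (1 + l) powr (- (1 - \<nu>))
             + (1 + l * (1 + c)) powr (- \<nu>) * ((1 - \<nu>) * (1 + l) powr (- (1 - \<nu>) - 1))) x"
      using p q unfolding p_def q_def by (intro continuous_intros) auto
    show "0 \<le> \<nu> * (1 + x * (1 + c)) powr (- \<nu> - 1) * (1 + x) powr (- (1 - \<nu>))
             + (1 + x * (1 + c)) powr (- \<nu>) * ((1 - \<nu>) * (1 + x) powr (- (1 - \<nu>) - 1))"
      using nu by (intro add_nonneg_nonneg mult_nonneg_nonneg) auto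
  next
    have "(F \<longlongrightarrow> F 0) (at_right 0)"
      unfolding F_def using c by (intro tendsto_intros) auto
    then show "(F \<longlongrightarrow> 0) (at_right 0)" by (simp add: F_def)
  next
    have ev: "\<forall>\<^sub>F l in at_top. (1 / (inverse l + 1)) * ((inverse l + 1) / (inverse l + (1 + c))) powr \<nu> = F l"
    proof (rule eventually_mono[OF eventually_gt_at_top[of 0]])
      fix l :: real assume l: "0 < l"
      have a: "1 / (inverse l + 1) = l / (1 + l)" using l by (simp add: field_simps)
      have pp: "1 + l * (1 + c) > 0" using l c by (simp add: add_pos_nonneg)
      have b: "(inverse l + 1) / (inverse l + (1 + c)) = (1 + l) / (1 + l * (1 + c))"
      proof -
        have "(inverse l + 1) / (inverse l + (1 + c)) = (l * (inverse l + 1)) / (l * (inverse l + (1 + c)))"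
          using l by simp
        also have "l * (inverse l + 1) = 1 + l" using l by (simp add: field_simps)
        also have "l * (inverse l + (1 + c)) = 1 + l * (1 + c)" using l by (simp add: field_simps)
        finally show ?thesis .
      qed
      show "(1 / (inverse l + 1)) * ((inverse l + 1) / (inverse l + (1 + c))) powr \<nu> = F l"
        unfolding a b F_def using l pp
        by (simp add: powr_divide powr_diff powr_minus divide_simps)
    qed
    have "((\<lambda>l. (1 / (inverse l + 1)) * ((inverse l + 1) / (inverse l + (1 + c))) powr \<nu>)
           \<longlongrightarrow> (1 / (0 + 1)) * ((0 + 1) / (0 + (1 + c))) powr \<nu>) at_top"
      using c by (intro tendsto_intros tendsto_inverse_0_at_top filterlim_ident) auto
    then have "((\<lambda>l. (1 / (inverse l + 1)) * ((inverse l + 1) / (inverse l + (1 + c))) powr \<nu>)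
           \<longlongrightarrow> (1 + c) powr (- \<nu>)) at_top"
      using c by (simp add: powr_divide powr_minus divide_simps)
    then show "(F \<longlongrightarrow> (1 + c) powr (- \<nu>)) at_top"
      using ev by (rule Lim_transform_eventually)
  qed
  then show ?thesis by simp
qed


lemma Z_part:
  fixes \<nu> c :: real
  assumes nu: "0 < \<nu>" "\<nu> < 1" and c: "0 \<le> c"
  shows "(\<integral>\<^sup>+z. ennreal (1 / (1 + c / z)) \<partial>Z_dist \<nu>) = ennreal ((1 + c) powr (- \<nu>))"
proof -
  define P where "P = gamma_dist \<nu>"
  define Q where "Q = gamma_dist (1 - \<nu>)"
  interpret Q: sigma_finite_measure Q unfolding Q_def by (rule sigma_finite_gamma_dist)
  define f where "f = (\<lambda>z::real. ennreal (1 / (1 + c / z)))"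
  have fm[measurable]: "f \<in> borel_measurable borel" unfolding f_def by measurable
  have sP[measurable_cong]: "sets P = sets borel" unfolding P_def gamma_dist_def by simp
  have sQ[measurable_cong]: "sets Q = sets borel" unfolding Q_def gamma_dist_def by simp
  have Zd: "Z_dist \<nu> = distr (P \<Otimes>\<^sub>M Q) borel (\<lambda>(g1, g2). (g1 + g2) / g1)"
    using nu unfolding Z_dist_def P_def Q_def by simp
  define H where "H = (\<lambda>g1 g2 l.
     (gd \<nu> g1 * ennreal (g1 * exp (- ((l * (1 + c)) * g1)))) * (gd (1 - \<nu>) g2 * ennreal (exp (- (l * g2)))) * indicator {0<..} l
   + (gd \<nu> g1 * ennreal (exp (- ((l * (1 + c)) * g1)))) * (gd (1 - \<nu>) g2 * ennreal (g2 * exp (- (l * g2)))) * indicator {0<..} l)"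
  have "(\<integral>\<^sup>+z. f z \<partial>Z_dist \<nu>) = (\<integral>\<^sup>+x. f ((\<lambda>(g1, g2). (g1 + g2) / g1) x) \<partial>(P \<Otimes>\<^sub>M Q))"
    unfolding Zd by (rule nn_integral_distr) measurable
  also have "\<dots> = (\<integral>\<^sup>+g1. \<integral>\<^sup>+g2. f ((g1 + g2) / g1) \<partial>Q \<partial>P)"
    by (subst Q.nn_integral_fst[symmetric]) (auto simp: case_prod_beta)
  also have "\<dots> = (\<integral>\<^sup>+g1. gd \<nu> g1 * (\<integral>\<^sup>+g2. gd (1 - \<nu>) g2 * f ((g1 + g2) / g1) \<partial>lborel) \<partial>lborel)"
    unfolding P_def Q_def gamma_dist_gd
    apply (subst nn_integral_density, measurable)+ done
  also have "\<dots> = (\<integral>\<^sup>+g1. \<integral>\<^sup>+g2. \<integral>\<^sup>+l. H g1 g2 l \<partial>lborel \<partial>lborel \<partial>lborel)"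
  proof (intro nn_integral_cong)
    fix g1 :: real
    have "gd \<nu> g1 * (\<integral>\<^sup>+g2. gd (1 - \<nu>) g2 * f ((g1 + g2) / g1) \<partial>lborel)
        = (\<integral>\<^sup>+g2. gd \<nu> g1 * (gd (1 - \<nu>) g2 * f ((g1 + g2) / g1)) \<partial>lborel)"
      by (rule nn_integral_cmult[symmetric]) measurable
    also have "\<dots> = (\<integral>\<^sup>+g2. \<integral>\<^sup>+l. H g1 g2 l \<partial>lborel \<partial>lborel)"
    proof (intro nn_integral_cong)
      fix g2 :: real
      show "gd \<nu> g1 * (gd (1 - \<nu>) g2 * f ((g1 + g2) / g1)) = (\<integral>\<^sup>+l. H g1 g2 l \<partial>lborel)"
      proof (cases "g1 > 0 \<and> g2 > 0")
        case True
        then have g1: "g1 > 0" and g2: "g2 > 0" by auto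
        define K where "K = (1 + c) * g1 + g2"
        have K: "K > 0" unfolding K_def using g1 g2 c by (simp add: add_pos_pos)
        have "(\<integral>\<^sup>+l. H g1 g2 l \<partial>lborel)
            = (\<integral>\<^sup>+l. (gd \<nu> g1 * gd (1 - \<nu>) g2) * (ennreal ((g1 + g2) * exp (- (l * K))) * indicator {0<..} l) \<partial>lborel)"
        proof (intro nn_integral_cong)
          fix l :: real
          have ex: "exp (- (l * (1 + c) * g1)) * exp (- (l * g2)) = exp (- (l * K))"
            unfolding K_def by (simp add: exp_add[symmetric] algebra_simps)
          have "g1 * exp (- (l * (1 + c) * g1)) * exp (- (l * g2)) + exp (- (l * (1 + c) * g1)) * (g2 * exp (- (l * g2)))
              = (g1 + g2) * exp (- (l * K))"
            using ex by (simp add: algebra_simps)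
          then show "H g1 g2 l = (gd \<nu> g1 * gd (1 - \<nu>) g2) * (ennreal ((g1 + g2) * exp (- (l * K))) * indicator {0<..} l)"
            unfolding H_def using g1 g2
            by (auto simp: indicator_def ennreal_mult'[symmetric] ennreal_plus[symmetric] distrib_left[symmetric] mult.assoc mult.left_commute)
        qed
        also have "\<dots> = (gd \<nu> g1 * gd (1 - \<nu>) g2) * ennreal ((g1 + g2) / K)"
          using K g1 g2 by (subst nn_integral_cmult) (auto simp: exp_nn)
        also have "f ((g1 + g2) / g1) = ennreal ((g1 + g2) / K)"
          unfolding f_def K_def using g1 g2 by (simp add: field_simps)
        ultimately show ?thesis by (simp add: mult.assoc)
      next
        case False
        then have "gd \<nu> g1 = 0 \<or> gd (1 - \<nu>) g2 = 0" by (auto simp: gd_def)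
        then show ?thesis unfolding H_def by auto
      qed
    qed
    finally show "gd \<nu> g1 * (\<integral>\<^sup>+g2. gd (1 - \<nu>) g2 * f ((g1 + g2) / g1) \<partial>lborel)
        = (\<integral>\<^sup>+g2. \<integral>\<^sup>+l. H g1 g2 l \<partial>lborel \<partial>lborel)" .
  qed
  also have "\<dots> = (\<integral>\<^sup>+l. \<integral>\<^sup>+g1. \<integral>\<^sup>+g2. H g1 g2 l \<partial>lborel \<partial>lborel \<partial>lborel)"
  proof -
    have "(\<integral>\<^sup>+g1. \<integral>\<^sup>+g2. \<integral>\<^sup>+l. H g1 g2 l \<partial>lborel \<partial>lborel \<partial>lborel)
        = (\<integral>\<^sup>+g1. \<integral>\<^sup>+l. \<integral>\<^sup>+g2. H g1 g2 l \<partial>lborel \<partial>lborel \<partial>lborel)"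
    proof (rule nn_integral_cong)
      fix g1 :: real
      show "(\<integral>\<^sup>+g2. \<integral>\<^sup>+l. H g1 g2 l \<partial>lborel \<partial>lborel) = (\<integral>\<^sup>+l. \<integral>\<^sup>+g2. H g1 g2 l \<partial>lborel \<partial>lborel)"
        by (rule lborel_pair.Fubini'[symmetric]) (unfold H_def, measurable)
    qed
    also have "\<dots> = (\<integral>\<^sup>+l. \<integral>\<^sup>+g1. \<integral>\<^sup>+g2. H g1 g2 l \<partial>lborel \<partial>lborel \<partial>lborel)"
      by (rule lborel_pair.Fubini'[symmetric]) (unfold H_def, measurable)
    finally show ?thesis .
  qed
  also have "\<dots> = (\<integral>\<^sup>+l. ennreal (\<nu> * (1 + l * (1 + c)) powr (- \<nu> - 1) * (1 + l) powr (- (1 - \<nu>))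
             + (1 + l * (1 + c)) powr (- \<nu>) * ((1 - \<nu>) * (1 + l) powr (- (1 - \<nu>) - 1)))
            * indicator {0<..} l \<partial>lborel)"
  proof (intro nn_integral_cong)
    fix l :: real
    show "(\<integral>\<^sup>+g1. \<integral>\<^sup>+g2. H g1 g2 l \<partial>lborel \<partial>lborel) = ennreal (\<nu> * (1 + l * (1 + c)) powr (- \<nu> - 1) * (1 + l) powr (- (1 - \<nu>))
             + (1 + l * (1 + c)) powr (- \<nu>) * ((1 - \<nu>) * (1 + l) powr (- (1 - \<nu>) - 1)))
            * indicator {0<..} l"
    proof (cases "l > 0")
      case False
      then show ?thesis unfolding H_def by simp
    next
      case True
      have s: "l * (1 + c) \<ge> 0" using True c by simp
      have nu1: "1 - \<nu> > 0" using nu by simp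
      have "(\<integral>\<^sup>+g1. \<integral>\<^sup>+g2. H g1 g2 l \<partial>lborel \<partial>lborel)
          = (\<integral>\<^sup>+g1. (gd \<nu> g1 * ennreal (g1 * exp (- ((l * (1 + c)) * g1)))) * ennreal ((1 + l) powr (- (1 - \<nu>)))
              + (gd \<nu> g1 * ennreal (exp (- ((l * (1 + c)) * g1)))) * ennreal ((1 - \<nu>) * (1 + l) powr (- (1 - \<nu>) - 1)) \<partial>lborel)"
      proof (intro nn_integral_cong)
        fix g1 :: real
        have "(\<integral>\<^sup>+g2. H g1 g2 l \<partial>lborel)
            = (\<integral>\<^sup>+g2. (gd \<nu> g1 * ennreal (g1 * exp (- ((l * (1 + c)) * g1)))) * (gd (1 - \<nu>) g2 * ennreal (exp (- (l * g2))))
                + (gd \<nu> g1 * ennreal (exp (- ((l * (1 + c)) * g1)))) * (gd (1 - \<nu>) g2 * ennreal (g2 * exp (- (l * g2)))) \<partial>lborel)"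
          unfolding H_def using True by simp
        also have "\<dots> = (gd \<nu> g1 * ennreal (g1 * exp (- ((l * (1 + c)) * g1)))) * (\<integral>\<^sup>+g2. gd (1 - \<nu>) g2 * ennreal (exp (- (l * g2))) \<partial>lborel)
                + (gd \<nu> g1 * ennreal (exp (- ((l * (1 + c)) * g1)))) * (\<integral>\<^sup>+g2. gd (1 - \<nu>) g2 * ennreal (g2 * exp (- (l * g2))) \<partial>lborel)"
          apply (subst nn_integral_add, measurable, subst nn_integral_cmult, measurable, subst nn_integral_cmult, measurable) done
        also have "\<dots> = (gd \<nu> g1 * ennreal (g1 * exp (- ((l * (1 + c)) * g1)))) * ennreal ((1 + l) powr (- (1 - \<nu>)))
              + (gd \<nu> g1 * ennreal (exp (- ((l * (1 + c)) * g1)))) * ennreal ((1 - \<nu>) * (1 + l) powr (- (1 - \<nu>) - 1))"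
          using gam0[OF nu1, of l] gam1[OF nu1, of l] True by simp
        finally show "(\<integral>\<^sup>+g2. H g1 g2 l \<partial>lborel) = \<dots>" .
      qed
      also have "\<dots> = ennreal ((1 + l) powr (- (1 - \<nu>))) * (\<integral>\<^sup>+g1. gd \<nu> g1 * ennreal (g1 * exp (- ((l * (1 + c)) * g1))) \<partial>lborel)
              + ennreal ((1 - \<nu>) * (1 + l) powr (- (1 - \<nu>) - 1)) * (\<integral>\<^sup>+g1. gd \<nu> g1 * ennreal (exp (- ((l * (1 + c)) * g1))) \<partial>lborel)"
        by (subst nn_integral_add, measurable, subst nn_integral_multc, measurable, subst nn_integral_multc, measurable) (simp add: mult.commute)
      also have "\<dots> = ennreal ((1 + l) powr (- (1 - \<nu>))) * ennreal (\<nu> * (1 + l * (1 + c)) powr (- \<nu> - 1))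
              + ennreal ((1 - \<nu>) * (1 + l) powr (- (1 - \<nu>) - 1)) * ennreal ((1 + l * (1 + c)) powr (- \<nu>))"
        using gam0[OF nu(1) s] gam1[OF nu(1) s] by simp
      also have "\<dots> = ennreal (\<nu> * (1 + l * (1 + c)) powr (- \<nu> - 1) * (1 + l) powr (- (1 - \<nu>))
             + (1 + l * (1 + c)) powr (- \<nu>) * ((1 - \<nu>) * (1 + l) powr (- (1 - \<nu>) - 1)))"
      proof -
        have "ennreal ((1 + l) powr (- (1 - \<nu>))) * ennreal (\<nu> * (1 + l * (1 + c)) powr (- \<nu> - 1))
              + ennreal ((1 - \<nu>) * (1 + l) powr (- (1 - \<nu>) - 1)) * ennreal ((1 + l * (1 + c)) powr (- \<nu>))
            = ennreal ((1 + l) powr (- (1 - \<nu>)) * (\<nu> * (1 + l * (1 + c)) powr (- \<nu> - 1))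
              + ((1 - \<nu>) * (1 + l) powr (- (1 - \<nu>) - 1)) * (1 + l * (1 + c)) powr (- \<nu>))"
          using nu by (simp add: ennreal_mult'[symmetric] ennreal_plus[symmetric] del: ennreal_plus)
        also have "(1 + l) powr (- (1 - \<nu>)) * (\<nu> * (1 + l * (1 + c)) powr (- \<nu> - 1))
              + ((1 - \<nu>) * (1 + l) powr (- (1 - \<nu>) - 1)) * (1 + l * (1 + c)) powr (- \<nu>)
            = \<nu> * (1 + l * (1 + c)) powr (- \<nu> - 1) * (1 + l) powr (- (1 - \<nu>))
             + (1 + l * (1 + c)) powr (- \<nu>) * ((1 - \<nu>) * (1 + l) powr (- (1 - \<nu>) - 1))"
          by (simp only: mult.commute mult.left_commute)
        finally show ?thesis .
      qed
      finally show ?thesis using True by simp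
    qed
  qed
  also have "\<dots> = ennreal ((1 + c) powr (- \<nu>))"
    by (rule Zftc[OF nu c])
  finally show ?thesis unfolding f_def .
qed


lemma stable_basic:
  assumes S: "one_sided_stable \<delta> S"
  shows "prob_space S" "sets S = sets borel" "AE x in S. 0 \<le> x"
    "\<And>s. s \<ge> 0 \<Longrightarrow> (\<integral>x. exp (- (s * x)) \<partial>S) = exp (- (s powr \<delta>))"
  using S unfolding one_sided_stable_def by auto

lemma stable_lap_nn:
  assumes S: "one_sided_stable \<delta> S" and s: "s \<ge> 0"
  shows "(\<integral>\<^sup>+x. ennreal (exp (- (s * x))) \<partial>S) = ennreal (exp (- (s powr \<delta>)))"
proof -
  note b = stable_basic[OF S]
  have sS[measurable_cong]: "sets S = sets borel" by (rule b(2))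
  have I: "integrable S (\<lambda>x. exp (- (s * x)))"
  proof (rule ccontr)
    assume "\<not> integrable S (\<lambda>x. exp (- (s * x)))"
    then have "(\<integral>x. exp (- (s * x)) \<partial>S) = 0" by (rule not_integrable_integral_eq)
    with b(4)[OF s] show False by simp
  qed
  have "(\<integral>\<^sup>+x. ennreal (exp (- (s * x))) \<partial>S) = ennreal (\<integral>x. exp (- (s * x)) \<partial>S)"
    by (rule nn_integral_eq_integral[OF I]) simp
  then show ?thesis using b(4)[OF s] by simp
qed

lemma stable_pos:
  assumes d: "0 < \<delta>" and S: "one_sided_stable \<delta> S"
  shows "AE x in S. 0 < x"
proof -
  note b = stable_basic[OF S]
  interpret prob_space S by (rule b(1))
  have sS[measurable_cong]: "sets S = sets borel" by (rule b(2))
  have le: "measure S {0} \<le> exp (- (s powr \<delta>))" if s: "s \<ge> 0" for s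
  proof -
    have "emeasure S {0} = (\<integral>\<^sup>+x. indicator {0} x \<partial>S)"
      by (rule nn_integral_indicator[symmetric]) simp
    also have "\<dots> \<le> (\<integral>\<^sup>+x. ennreal (exp (- (s * x))) \<partial>S)"
      by (intro nn_integral_mono) (auto split: split_indicator)
    also have "\<dots> = ennreal (exp (- (s powr \<delta>)))" by (rule stable_lap_nn[OF S s])
    finally show ?thesis by (simp add: emeasure_eq_measure)
  qed
  have lim: "((\<lambda>s. exp (- (s powr \<delta>))) \<longlongrightarrow> 0) at_top"
    using filterlim_compose[OF exp_at_bot filterlim_compose[OF filterlim_uminus_at_bot_at_top real_powr_at_top[OF d]]]
    by (simp add: o_def)
  have "measure S {0} \<le> 0"
    by (rule tendsto_lowerbound[OF lim]) (use le in \<open>auto intro: eventually_mono[OF eventually_ge_at_top[of 0]]\<close>)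
  then have "emeasure S {0} = 0" by (simp add: emeasure_eq_measure measure_nonneg antisym)
  then have "AE x in S. x \<noteq> 0"
    by (intro AE_I[where N="{0}"]) (auto simp: sets_eq_imp_space_eq[OF sS])
  with b(3) show ?thesis by eventually_elim auto
qed


lemma stable_integrable:
  assumes S: "one_sided_stable \<delta> S" and s: "s \<ge> 0"
  shows "integrable S (\<lambda>x. exp (- (s * x)))"
proof (rule ccontr)
  note b = stable_basic[OF S]
  assume "\<not> integrable S (\<lambda>x. exp (- (s * x)))"
  then have "(\<integral>x. exp (- (s * x)) \<partial>S) = 0" by (rule not_integrable_integral_eq)
  with b(4)[OF s] show False by simp
qed

lemma powr_tendsto_0_right:
  fixes d :: real assumes d: "0 < d"
  shows "((\<lambda>x::real. x powr d) \<longlongrightarrow> 0) (at_right 0)"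
  by (rule tendsto_zero_powrI[OF tendsto_ident_at tendsto_const _ d])
     (auto simp: eventually_at_right_less eventually_at_filter)

lemma exp_neg_powr_at_top:
  fixes d a :: real assumes d: "0 < d" and a: "0 < a"
  shows "((\<lambda>x::real. exp (- (a * x powr d))) \<longlongrightarrow> 0) at_top"
proof -
  have "filterlim (\<lambda>x::real. a * x powr d) at_top at_top"
    using filterlim_tendsto_pos_mult_at_top[OF tendsto_const a real_powr_at_top[OF d]] by simp
  then show ?thesis
    using filterlim_compose[OF exp_at_bot filterlim_compose[OF filterlim_uminus_at_bot_at_top]] by blast
qed

lemma Rftc:
  fixes d a :: real
  assumes d: "0 < d" and a: "0 < a"
  shows "(\<integral>\<^sup>+m. ennreal (d * a * m powr (d - 1) * exp (- (a * m powr d)) * (1 - exp (- (m powr d))))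
            * indicator {0<..} m \<partial>lborel) = ennreal (1 / (1 + a))"
proof -
  define F where "F = (\<lambda>m::real. - exp (- (a * m powr d)) + a / (1 + a) * exp (- ((1 + a) * m powr d)))"
  have "(\<integral>\<^sup>+m. ennreal (d * a * m powr (d - 1) * exp (- (a * m powr d)) * (1 - exp (- (m powr d))))
            * indicator {0<..} m \<partial>lborel) = ennreal (0 - (- 1 + a / (1 + a)))"
  proof (rule nn_FTC_Ioi[where F = F])
    fix x :: real assume x: "0 < x"
    have D: "((\<lambda>m. m powr d) has_real_derivative d * x powr (d - 1)) (at x)"
      by (rule has_real_derivative_powr[OF x])
    have "(F has_real_derivative
        exp (- (a * x powr d)) * (a * (d * x powr (d - 1)))
        - a / (1 + a) * (exp (- ((1 + a) * x powr d)) * ((1 + a) * (d * x powr (d - 1))))) (at x)"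
      unfolding F_def using x by (auto intro!: derivative_eq_intros D)
    moreover have "exp (- (a * x powr d)) * (a * (d * x powr (d - 1)))
        - a / (1 + a) * (exp (- ((1 + a) * x powr d)) * ((1 + a) * (d * x powr (d - 1))))
        = d * a * x powr (d - 1) * exp (- (a * x powr d)) * (1 - exp (- (x powr d)))"
    proof -
      have "exp (- ((1 + a) * x powr d)) = exp (- (a * x powr d)) * exp (- (x powr d))"
        by (simp add: exp_add[symmetric] algebra_simps)
      then show ?thesis using a by (simp add: field_simps)
    qed
    ultimately show "(F has_real_derivative d * a * x powr (d - 1) * exp (- (a * x powr d)) * (1 - exp (- (x powr d)))) (at x)"
      by simp
    show "isCont (\<lambda>m. d * a * m powr (d - 1) * exp (- (a * m powr d)) * (1 - exp (- (m powr d)))) x"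
      using x by (intro continuous_intros) auto
    show "0 \<le> d * a * x powr (d - 1) * exp (- (a * x powr d)) * (1 - exp (- (x powr d)))"
      using d a by (intro mult_nonneg_nonneg) auto
  next
    have "(F \<longlongrightarrow> - exp (- (a * 0)) + a / (1 + a) * exp (- ((1 + a) * 0))) (at_right 0)"
      unfolding F_def by (intro tendsto_intros powr_tendsto_0_right d)
    then show "(F \<longlongrightarrow> - 1 + a / (1 + a)) (at_right 0)" by simp
    have "(F \<longlongrightarrow> - 0 + a / (1 + a) * 0) at_top"
      unfolding F_def using a d by (intro tendsto_intros exp_neg_powr_at_top) auto
    then show "(F \<longlongrightarrow> 0) at_top" by simp
  qed
  also have "0 - (- 1 + a / (1 + a)) = 1 / (1 + a)"
    using a by (simp add: field_simps)
  finally show ?thesis .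
qed

lemma tailftc:
  fixes d a l :: real
  assumes d: "0 < d" and a: "0 < a" and l: "0 < l"
  shows "(\<integral>\<^sup>+m. ennreal (d * a * m powr (d - 1) * exp (- (a * m powr d))) * indicator {l<..} m \<partial>lborel)
       = ennreal (exp (- (a * l powr d)))"
proof -
  have "(\<integral>\<^sup>+m. ennreal (d * a * m powr (d - 1) * exp (- (a * m powr d))) * indicator {l<..} m \<partial>lborel)
      = ennreal (0 - (- exp (- (a * l powr d))))"
  proof (rule nn_FTC_Ioi[where F = "\<lambda>m. - exp (- (a * m powr d))"])
    fix x :: real assume x: "l < x"
    then have x0: "0 < x" using l by simp
    have D: "((\<lambda>m. m powr d) has_real_derivative d * x powr (d - 1)) (at x)"
      by (rule has_real_derivative_powr[OF x0])
    show "((\<lambda>m. - exp (- (a * m powr d))) has_real_derivative d * a * x powr (d - 1) * exp (- (a * x powr d))) (at x)"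
      using x0 by (auto intro!: derivative_eq_intros D simp: algebra_simps)
    show "isCont (\<lambda>m. d * a * m powr (d - 1) * exp (- (a * m powr d))) x"
      using x0 by (intro continuous_intros) auto
    show "0 \<le> d * a * x powr (d - 1) * exp (- (a * x powr d))"
      using d a by simp
  next
    have "isCont (\<lambda>m. - exp (- (a * m powr d))) l"
      using l by (intro continuous_intros) auto
    then show "((\<lambda>m. - exp (- (a * m powr d))) \<longlongrightarrow> - exp (- (a * l powr d))) (at_right l)"
      by (simp add: isCont_def filterlim_at_split)
    have "((\<lambda>m. - exp (- (a * m powr d))) \<longlongrightarrow> - 0) at_top"
      by (intro tendsto_intros exp_neg_powr_at_top d a)
    then show "((\<lambda>m. - exp (- (a * m powr d))) \<longlongrightarrow> 0) at_top" by simp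
  qed
  then show ?thesis by simp
qed

lemma headftc:
  fixes y m :: real
  assumes y: "0 \<le> y" and m: "0 < m"
  shows "(\<integral>\<^sup>+l. ennreal (y * exp (- (l * y))) * indicator {0<..<m} l \<partial>lborel) = ennreal (1 - exp (- (m * y)))"
proof -
  have "(\<integral>\<^sup>+l. ennreal (y * exp (- (l * y))) * indicator {0<..<m} l \<partial>lborel) = ennreal (- exp (- (m * y)) - (- exp (- (0 * y))))"
  proof (rule nn_FTC_Ioo[OF m, where F = "\<lambda>l. - exp (- (l * y))"])
    fix x :: real
    show "((\<lambda>l. - exp (- (l * y))) has_real_derivative y * exp (- (x * y))) (at x)"
      by (auto intro!: derivative_eq_intros)
    show "isCont (\<lambda>l. y * exp (- (l * y))) x" by (intro continuous_intros)
    show "0 \<le> y * exp (- (x * y))" using y by simp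
  next
    show "((\<lambda>l. - exp (- (l * y))) \<longlongrightarrow> - exp (- (0 * y))) (at_right 0)"
      by (intro tendsto_intros)
    show "((\<lambda>l. - exp (- (l * y))) \<longlongrightarrow> - exp (- (m * y))) (at_left m)"
      by (intro tendsto_intros)
  qed
  then show ?thesis by simp
qed


lemma R_part:
  fixes \<delta> u :: real
  assumes d: "0 < \<delta>" and S: "one_sided_stable \<delta> S" and u: "0 < u"
  shows "(\<integral>\<^sup>+r. ennreal (1 / (1 + u * r)) \<partial>R_dist S) = ennreal (1 / (1 + u powr \<delta>))"
proof -
  note b = stable_basic[OF S]
  interpret S: prob_space S by (rule b(1))
  have sS[measurable_cong]: "sets S = sets borel" by (rule b(2))
  have PSL: "pair_sigma_finite S lborel"
    by (simp add: pair_sigma_finite_def S.sigma_finite_measure_axioms lborel.sigma_finite_measure_axioms)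
  define a where "a = u powr \<delta>"
  have a: "0 < a" unfolding a_def using u by simp
  define f where "f = (\<lambda>r::real. ennreal (1 / (1 + u * r)))"
  have fm[measurable]: "f \<in> borel_measurable borel" unfolding f_def by measurable
  define h where "h = (\<lambda>x y l::real. ennreal (exp (- ((l * u) * x))) * (ennreal (y * exp (- (l * y))) * indicator {0<..} l))"
  define m where "m = (\<lambda>l. \<integral>\<^sup>+y. ennreal (y * exp (- (l * y))) \<partial>S)"
  have mm[measurable]: "m \<in> borel_measurable borel"
    unfolding m_def by (rule S.borel_measurable_nn_integral) measurable
  have mm'[measurable]: "m \<in> borel_measurable lborel" using mm by simp
  have pr[measurable]: "Measurable.pred (borel \<Otimes>\<^sub>M borel) (\<lambda>x::real\<times>real. fst x \<in> {snd x<..})"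
    unfolding greaterThan_def mem_Collect_eq by measurable
  define kk where "kk = (\<lambda>x::real. ennreal (\<delta> * a * x powr (\<delta> - 1) * exp (- (a * x powr \<delta>))))"
  have "(\<integral>\<^sup>+r. f r \<partial>R_dist S) = (\<integral>\<^sup>+p. f ((\<lambda>(x, y). x / y) p) \<partial>(S \<Otimes>\<^sub>M S))"
    unfolding R_dist_def by (rule nn_integral_distr) measurable
  also have "\<dots> = (\<integral>\<^sup>+x. \<integral>\<^sup>+y. f (x / y) \<partial>S \<partial>S)"
    by (subst S.nn_integral_fst[symmetric]) (auto simp: case_prod_beta)
  also have "\<dots> = (\<integral>\<^sup>+x. \<integral>\<^sup>+y. \<integral>\<^sup>+l. h x y l \<partial>lborel \<partial>S \<partial>S)"
  proof (rule nn_integral_cong_AE)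
    show "AE x in S. (\<integral>\<^sup>+y. f (x / y) \<partial>S) = (\<integral>\<^sup>+y. \<integral>\<^sup>+l. h x y l \<partial>lborel \<partial>S)"
      using b(3)
    proof eventually_elim
      case (elim x)
      show ?case
      proof (rule nn_integral_cong_AE)
        show "AE y in S. f (x / y) = (\<integral>\<^sup>+l. h x y l \<partial>lborel)"
          using stable_pos[OF d S]
        proof eventually_elim
          case (elim y)
          define K where "K = y + u * x"
          have K: "K > 0" unfolding K_def using elim \<open>0 \<le> x\<close> u by (simp add: add_pos_nonneg)
          have "(\<integral>\<^sup>+l. h x y l \<partial>lborel) = (\<integral>\<^sup>+l. ennreal (y * exp (- (l * K))) * indicator {0<..} l \<partial>lborel)"
          proof (rule nn_integral_cong)
            fix l :: real
            have e: "exp (- (l * u * x)) * y * exp (- (l * y)) = y * exp (- (l * K))"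
              unfolding K_def by (simp add: exp_add[symmetric] algebra_simps)
            then show "h x y l = ennreal (y * exp (- (l * K))) * indicator {0<..} l"
              unfolding h_def using elim by (simp add: ennreal_mult'[symmetric] mult.assoc[symmetric] e)
          qed
          also have "\<dots> = ennreal (y / K)" by (rule exp_nn[OF K]) (use elim in simp)
          also have "y / K = 1 / (1 + u * (x / y))"
            unfolding K_def using elim by (simp add: field_simps)
          finally show ?case unfolding f_def by simp
        qed
      qed
    qed
  qed
  also have "\<dots> = (\<integral>\<^sup>+l. \<integral>\<^sup>+x. \<integral>\<^sup>+y. h x y l \<partial>S \<partial>S \<partial>lborel)"
  proof -
    have "(\<integral>\<^sup>+x. \<integral>\<^sup>+y. \<integral>\<^sup>+l. h x y l \<partial>lborel \<partial>S \<partial>S) = (\<integral>\<^sup>+x. \<integral>\<^sup>+l. \<integral>\<^sup>+y. h x y l \<partial>S \<partial>lborel \<partial>S)"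
    proof (rule nn_integral_cong)
      fix x :: real
      show "(\<integral>\<^sup>+y. \<integral>\<^sup>+l. h x y l \<partial>lborel \<partial>S) = (\<integral>\<^sup>+l. \<integral>\<^sup>+y. h x y l \<partial>S \<partial>lborel)"
        by (rule pair_sigma_finite.Fubini'[OF PSL, symmetric]) (unfold h_def, measurable)
    qed
    also have "\<dots> = (\<integral>\<^sup>+l. \<integral>\<^sup>+x. \<integral>\<^sup>+y. h x y l \<partial>S \<partial>S \<partial>lborel)"
      by (rule pair_sigma_finite.Fubini'[OF PSL, symmetric]) (unfold h_def, measurable)
    finally show ?thesis .
  qed
  also have "\<dots> = (\<integral>\<^sup>+l. ennreal (exp (- (a * l powr \<delta>))) * (m l * indicator {0<..} l) \<partial>lborel)"
  proof (rule nn_integral_cong)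
    fix l :: real
    show "(\<integral>\<^sup>+x. \<integral>\<^sup>+y. h x y l \<partial>S \<partial>S) = ennreal (exp (- (a * l powr \<delta>))) * (m l * indicator {0<..} l)"
    proof (cases "l > 0")
      case False
      then show ?thesis unfolding h_def by simp
    next
      case True
      have "(\<integral>\<^sup>+x. \<integral>\<^sup>+y. h x y l \<partial>S \<partial>S) = (\<integral>\<^sup>+x. ennreal (exp (- ((l * u) * x))) * m l \<partial>S)"
        unfolding h_def m_def using True
        by (intro nn_integral_cong) (simp add: nn_integral_cmult)
      also have "\<dots> = ennreal (exp (- ((l * u) powr \<delta>))) * m l"
        using True u by (subst nn_integral_multc) (auto simp: stable_lap_nn[OF S])
      also have "(l * u) powr \<delta> = a * l powr \<delta>"
        unfolding a_def using True u by (simp add: powr_mult)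
      finally show ?thesis using True by simp
    qed
  qed
  also have "\<dots> = (\<integral>\<^sup>+l. \<integral>\<^sup>+x. kk x * indicator {l<..} x * (m l * indicator {0<..} l) \<partial>lborel \<partial>lborel)"
  proof (rule nn_integral_cong)
    fix l :: real
    show "ennreal (exp (- (a * l powr \<delta>))) * (m l * indicator {0<..} l)
        = (\<integral>\<^sup>+x. kk x * indicator {l<..} x * (m l * indicator {0<..} l) \<partial>lborel)"
    proof (cases "l > 0")
      case False
      then show ?thesis by simp
    next
      case True
      show ?thesis
        by (subst nn_integral_multc, unfold kk_def, measurable) (simp add: tailftc[OF d a True])
    qed
  qed
  also have "\<dots> = (\<integral>\<^sup>+x. \<integral>\<^sup>+l. kk x * indicator {l<..} x * (m l * indicator {0<..} l) \<partial>lborel \<partial>lborel)"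
    by (rule lborel_pair.Fubini') (unfold kk_def, measurable)
  also have "\<dots> = (\<integral>\<^sup>+x. kk x * ennreal (1 - exp (- (x powr \<delta>))) * indicator {0<..} x \<partial>lborel)"
  proof (rule nn_integral_cong)
    fix x :: real
    have "(\<integral>\<^sup>+l. kk x * indicator {l<..} x * (m l * indicator {0<..} l) \<partial>lborel)
        = kk x * (\<integral>\<^sup>+l. m l * indicator {0<..<x} l \<partial>lborel)"
      by (subst nn_integral_cmult[symmetric], measurable)
         (intro nn_integral_cong, auto simp: indicator_def mult_ac)
    also have "(\<integral>\<^sup>+l. m l * indicator {0<..<x} l \<partial>lborel) = ennreal (1 - exp (- (x powr \<delta>))) * indicator {0<..} x"
    proof (cases "x > 0")
      case False
      then have "\<And>l. m l * indicator {0<..<x} l = 0" by (auto simp: indicator_def)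
      then show ?thesis using False by simp
    next
      case True
      have "(\<integral>\<^sup>+l. m l * indicator {0<..<x} l \<partial>lborel)
          = (\<integral>\<^sup>+l. \<integral>\<^sup>+y. ennreal (y * exp (- (l * y))) * indicator {0<..<x} l \<partial>S \<partial>lborel)"
        unfolding m_def by (intro nn_integral_cong) (simp add: nn_integral_multc)
      also have "\<dots> = (\<integral>\<^sup>+y. \<integral>\<^sup>+l. ennreal (y * exp (- (l * y))) * indicator {0<..<x} l \<partial>lborel \<partial>S)"
        by (rule pair_sigma_finite.Fubini'[OF PSL]) measurable
      also have "\<dots> = (\<integral>\<^sup>+y. ennreal (1 - exp (- (x * y))) \<partial>S)"
        by (rule nn_integral_cong_AE) (use b(3) in \<open>eventually_elim, simp add: headftc[OF _ True]\<close>)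
      also have "\<dots> = ennreal (\<integral>y. 1 - exp (- (x * y)) \<partial>S)"
        using True b(3)
        by (intro nn_integral_eq_integral Bochner_Integration.integrable_diff stable_integrable[OF S])
           (auto elim!: eventually_mono simp: mult_nonneg_nonneg)
      also have "(\<integral>y. 1 - exp (- (x * y)) \<partial>S) = 1 - exp (- (x powr \<delta>))"
        using True
        by (subst Bochner_Integration.integral_diff) (auto intro: stable_integrable[OF S] simp: b(4) S.prob_space)
      finally show ?thesis using True by simp
    qed
    finally show "(\<integral>\<^sup>+l. kk x * indicator {l<..} x * (m l * indicator {0<..} l) \<partial>lborel)
        = kk x * ennreal (1 - exp (- (x powr \<delta>))) * indicator {0<..} x" by (simp add: mult.assoc)
  qed
  also have "\<dots> = ennreal (1 / (1 + a))"
    unfolding kk_def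
  proof (subst Rftc[OF d a, symmetric], intro nn_integral_cong)
    fix x :: real
    have "0 \<le> \<delta> * a * x powr (\<delta> - 1) * exp (- (a * x powr \<delta>))" using d a by simp
    then show "ennreal (\<delta> * a * x powr (\<delta> - 1) * exp (- (a * x powr \<delta>))) * ennreal (1 - exp (- (x powr \<delta>))) * indicator {0<..} x =
         ennreal (\<delta> * a * x powr (\<delta> - 1) * exp (- (a * x powr \<delta>)) * (1 - exp (- (x powr \<delta>)))) * indicator {0<..} x"
      by (simp add: ennreal_mult'[symmetric] del: mult.assoc)
  qed
  finally show ?thesis unfolding f_def a_def .
qed


lemma Z_dist_pos:
  assumes "0 < \<nu>" "\<nu> \<le> 1"
  shows "AE z in Z_dist \<nu>. 0 < z"
proof (cases "\<nu> = 1")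
  case True
  have e: "Z_dist \<nu> = return borel 1" using True by (simp add: Z_dist_def)
  show ?thesis unfolding e by (simp add: AE_return)
next
  case False
  define P where "P = gamma_dist \<nu>"
  define Q where "Q = gamma_dist (1 - \<nu>)"
  have sP[measurable_cong]: "sets P = sets borel" unfolding P_def gamma_dist_def by simp
  have sQ[measurable_cong]: "sets Q = sets borel" unfolding Q_def gamma_dist_def by simp
  have PQ: "pair_sigma_finite P Q"
    unfolding pair_sigma_finite_def P_def Q_def by (simp add: sigma_finite_gamma_dist)
  have aeP: "AE x in P. 0 < x" unfolding P_def gamma_dist_gd
    by (subst AE_density) (auto simp: gd_def)
  have aeQ: "AE x in Q. 0 < x" unfolding Q_def gamma_dist_gd
    by (subst AE_density) (auto simp: gd_def)
  have "AE x in P. AE y in Q. 0 < (x + y) / x"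
    using aeP by eventually_elim (use aeQ in \<open>eventually_elim, simp\<close>)
  moreover have "{x \<in> space (P \<Otimes>\<^sub>M Q). 0 < (fst x + snd x) / fst x} \<in> sets (P \<Otimes>\<^sub>M Q)"
  proof -
    have e: "sets (P \<Otimes>\<^sub>M Q) = sets (borel \<Otimes>\<^sub>M borel)" by (rule sets_pair_measure_cong; rule sP sQ)
    show ?thesis unfolding e sets_eq_imp_space_eq[OF e] by measurable
  qed
  ultimately have "AE p in P \<Otimes>\<^sub>M Q. 0 < (fst p + snd p) / fst p"
    using pair_sigma_finite.AE_pair_iff[OF PQ, of "\<lambda>x y. 0 < (x + y) / x"] by simp
  moreover have e: "Z_dist \<nu> = distr (P \<Otimes>\<^sub>M Q) borel (\<lambda>(g1, g2). (g1 + g2) / g1)"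
    using False unfolding Z_dist_def P_def Q_def by simp
  moreover have "(AE z in distr (P \<Otimes>\<^sub>M Q) borel (\<lambda>(g1, g2). (g1 + g2) / g1). 0 < z)
      \<longleftrightarrow> (AE p in P \<Otimes>\<^sub>M Q. 0 < (\<lambda>(g1, g2). (g1 + g2) / g1) p)"
  proof -
    have sPQ: "sets (P \<Otimes>\<^sub>M Q) = sets (borel \<Otimes>\<^sub>M borel)" by (rule sets_pair_measure_cong; rule sP sQ)
    have m: "(\<lambda>(g1, g2). (g1 + g2) / g1) \<in> P \<Otimes>\<^sub>M Q \<rightarrow>\<^sub>M (borel :: real measure)"
      unfolding measurable_cong_sets[OF sPQ refl] by measurable
    show ?thesis by (rule AE_distr_iff[OF m]) simp
  qed
  ultimately show ?thesis by (metis (no_types, lifting) AE_cong case_prod_beta)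
qed

lemma R_dist_nonneg:
  assumes S: "one_sided_stable \<delta> S"
  shows "AE r in R_dist S. 0 \<le> r"
proof -
  note b = stable_basic[OF S]
  interpret S: prob_space S by (rule b(1))
  have sS[measurable_cong]: "sets S = sets borel" by (rule b(2))
  have PQ: "pair_sigma_finite S S"
    by (simp add: pair_sigma_finite_def S.sigma_finite_measure_axioms)
  have "AE x in S. AE y in S. 0 \<le> x / y"
    using b(3) by eventually_elim (use b(3) in \<open>eventually_elim, simp\<close>)
  moreover have "{x \<in> space (S \<Otimes>\<^sub>M S). 0 \<le> fst x / snd x} \<in> sets (S \<Otimes>\<^sub>M S)"
  proof -
    have e: "sets (S \<Otimes>\<^sub>M S) = sets (borel \<Otimes>\<^sub>M borel)" by (rule sets_pair_measure_cong; rule sS)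
    show ?thesis unfolding e sets_eq_imp_space_eq[OF e] by measurable
  qed
  ultimately have "AE p in S \<Otimes>\<^sub>M S. 0 \<le> fst p / snd p"
    using pair_sigma_finite.AE_pair_iff[OF PQ, of "\<lambda>x y. 0 \<le> x / y"] by simp
  moreover have "(AE r in R_dist S. 0 \<le> r) \<longleftrightarrow> (AE p in S \<Otimes>\<^sub>M S. 0 \<le> (\<lambda>(x, y). x / y) p)"
  proof -
    have sSS: "sets (S \<Otimes>\<^sub>M S) = sets (borel \<Otimes>\<^sub>M borel)"
      by (rule sets_pair_measure_cong; rule sS)
    have m: "(\<lambda>(x, y). x / y) \<in> S \<Otimes>\<^sub>M S \<rightarrow>\<^sub>M (borel :: real measure)"
      unfolding measurable_cong_sets[OF sSS refl] by measurable
    show ?thesis unfolding R_dist_def by (rule AE_distr_iff[OF m]) simp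
  qed
  ultimately show ?thesis by (simp add: case_prod_beta)
qed


lemma inner_RZ:
  fixes \<alpha> t z :: real
  assumes a: "0 < \<alpha>" and t: "t \<noteq> 0" and z: "0 < z"
    and S: "one_sided_stable (\<alpha> / 2) S"
  shows "(\<integral>\<^sup>+r. ennreal (1 / (1 + (t * (z powr (- 1 / \<alpha>) * sqrt r))\<^sup>2)) \<partial>R_dist S)
       = ennreal (1 / (1 + \<bar>t\<bar> powr \<alpha> / z))"
proof -
  define u where "u = t\<^sup>2 * z powr (- 2 / \<alpha>)"
  have u: "0 < u" unfolding u_def using t z by simp
  have "(\<integral>\<^sup>+r. ennreal (1 / (1 + (t * (z powr (- 1 / \<alpha>) * sqrt r))\<^sup>2)) \<partial>R_dist S)
      = (\<integral>\<^sup>+r. ennreal (1 / (1 + u * r)) \<partial>R_dist S)"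
  proof (rule nn_integral_cong_AE)
    show "AE r in R_dist S. ennreal (1 / (1 + (t * (z powr (- 1 / \<alpha>) * sqrt r))\<^sup>2)) = ennreal (1 / (1 + u * r))"
      using R_dist_nonneg[OF S]
    proof eventually_elim
      case (elim r)
      have "(z powr (- 1 / \<alpha>))\<^sup>2 = z powr (- 2 / \<alpha>)"
        using z by (simp add: power2_eq_square powr_add[symmetric] add_divide_distrib[symmetric])
      then have "(t * (z powr (- 1 / \<alpha>) * sqrt r))\<^sup>2 = u * r"
        unfolding u_def using elim by (simp add: power_mult_distrib)
      then show ?case by simp
    qed
  qed
  also have "\<dots> = ennreal (1 / (1 + u powr (\<alpha> / 2)))"
    by (rule R_part) (use a S u in auto)
  also have "u powr (\<alpha> / 2) = \<bar>t\<bar> powr \<alpha> / z"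
  proof -
    have e: "t\<^sup>2 = \<bar>t\<bar> powr 2" using t by (simp add: powr_numeral)
    have "(t\<^sup>2) powr (\<alpha> / 2) = \<bar>t\<bar> powr \<alpha>" unfolding e powr_powr by simp
    moreover have "(z powr (- 2 / \<alpha>)) powr (\<alpha> / 2) = 1 / z"
    proof -
      have "(z powr (- 2 / \<alpha>)) powr (\<alpha> / 2) = z powr (- 2 / \<alpha> * (\<alpha> / 2))" by (rule powr_powr)
      also have "- 2 / \<alpha> * (\<alpha> / 2) = -1" using a by simp
      finally show ?thesis using z by (simp add: powr_minus_divide)
    qed
    ultimately show ?thesis unfolding u_def using z t
      by (simp add: powr_mult)
  qed
  finally show ?thesis .
qed

lemma outer_Z:
  fixes \<nu> c :: real
  assumes "0 < \<nu>" "\<nu> \<le> 1" "0 \<le> c"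
  shows "(\<integral>\<^sup>+z. ennreal (1 / (1 + c / z)) \<partial>Z_dist \<nu>) = ennreal ((1 + c) powr (- \<nu>))"
proof (cases "\<nu> = 1")
  case True
  have e: "Z_dist \<nu> = return borel 1" using True by (simp add: Z_dist_def)
  show ?thesis unfolding e using True assms
    by (subst nn_integral_return) (auto simp: powr_minus_divide)
next
  case False
  then show ?thesis using assms by (intro Z_part) auto
qed


theorem mainTheorem4:
  fixes \<nu> \<alpha> :: real and M :: "'a measure"
    and Lam Z R :: "'a \<Rightarrow> real" and S :: "real measure"
  assumes "0 < \<nu>" "\<nu> \<le> 1" "0 < \<alpha>" "\<alpha> \<le> 2"
    and "prob_space M"
    and "prob_space.indep_vars M (\<lambda>_. borel) (\<lambda>i. [Lam, Z, R] ! i) {0, 1, 2 :: nat}"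
    and "distributed M lborel Lam laplace_density"
    and "distr M borel Z = Z_dist \<nu>"
    and "one_sided_stable (\<alpha> / 2) S"
    and "distr M borel R = R_dist S"
  shows "\<forall>t. char (distr M borel (\<lambda>\<omega>. Lam \<omega> * Z \<omega> powr (- 1 / \<alpha>) * sqrt (R \<omega>))) t
           = complex_of_real ((1 + \<bar>t\<bar> powr \<alpha>) powr (- \<nu>))"
proof
  fix t :: real
  interpret prob_space M by (rule assms(5))
  note ind = assms(6)
  have rv: "random_variable borel Lam" "random_variable borel Z" "random_variable borel R"
    using ind unfolding indep_vars_def by (auto dest: bspec[of _ _ 0] bspec[of _ _ 1] bspec[of _ _ 2])
  define XX where "XX = (\<lambda>\<omega>. Lam \<omega> * Z \<omega> powr (- 1 / \<alpha>) * sqrt (R \<omega>))"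
  have XXm: "random_variable borel XX" unfolding XX_def using rv by measurable
  define W where "W = (\<lambda>\<omega>. Z \<omega> powr (- 1 / \<alpha>) * sqrt (R \<omega>))"
  have Wm: "random_variable borel W" unfolding W_def using rv by measurable
  have ind1: "indep_var borel Lam borel W"
  proof -
    have "indep_var (PiM {0} (\<lambda>_. borel)) (\<lambda>\<omega>. restrict (\<lambda>i. ([Lam, Z, R] ! i) \<omega>) {0})
        (PiM {1, 2} (\<lambda>_. borel)) (\<lambda>\<omega>. restrict (\<lambda>i. ([Lam, Z, R] ! i) \<omega>) {1, 2})"
      by (rule indep_var_restrict[OF ind]) auto
    moreover have m1: "(\<lambda>f. f 0) \<in> PiM {0::nat} (\<lambda>_. borel) \<rightarrow>\<^sub>M (borel :: real measure)"
      by (rule measurable_component_singleton) simp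
    moreover have m2: "(\<lambda>f. f 1 powr (- 1 / \<alpha>) * sqrt (f 2)) \<in> PiM {1::nat, 2} (\<lambda>_. borel) \<rightarrow>\<^sub>M (borel :: real measure)"
    proof -
      have "(\<lambda>f. f 1) \<in> PiM {1::nat, 2} (\<lambda>_. borel) \<rightarrow>\<^sub>M (borel :: real measure)"
        by (rule measurable_component_singleton) simp
      moreover have "(\<lambda>f. f 2) \<in> PiM {1::nat, 2} (\<lambda>_. borel) \<rightarrow>\<^sub>M (borel :: real measure)"
        by (rule measurable_component_singleton) simp
      ultimately show ?thesis by measurable
    qed
    ultimately have "indep_var borel ((\<lambda>f. f 0) \<circ> (\<lambda>\<omega>. restrict (\<lambda>i. ([Lam, Z, R] ! i) \<omega>) {0}))
        borel ((\<lambda>f. f 1 powr (- 1 / \<alpha>) * sqrt (f 2)) \<circ> (\<lambda>\<omega>. restrict (\<lambda>i. ([Lam, Z, R] ! i) \<omega>) {1, 2}))"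
      by (rule indep_var_compose)
    moreover have "(\<lambda>f. f 0) \<circ> (\<lambda>\<omega>. restrict (\<lambda>i. ([Lam, Z, R] ! i) \<omega>) {0}) = Lam"
      by (simp add: fun_eq_iff)
    moreover have "(\<lambda>f. f 1 powr (- 1 / \<alpha>) * sqrt (f 2)) \<circ> (\<lambda>\<omega>. restrict (\<lambda>i. ([Lam, Z, R] ! i) \<omega>) {1, 2}) = W"
      by (simp add: fun_eq_iff numeral_2_eq_2 W_def)
    ultimately show ?thesis by simp
  qed
  have ind2: "indep_var borel Z borel R"
  proof -
    have "indep_var (PiM {1} (\<lambda>_. borel)) (\<lambda>\<omega>. restrict (\<lambda>i. ([Lam, Z, R] ! i) \<omega>) {1})
        (PiM {2} (\<lambda>_. borel)) (\<lambda>\<omega>. restrict (\<lambda>i. ([Lam, Z, R] ! i) \<omega>) {2})"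
      by (rule indep_var_restrict[OF ind]) auto
    moreover have "(\<lambda>f. f 1) \<in> PiM {1::nat} (\<lambda>_. borel) \<rightarrow>\<^sub>M (borel :: real measure)"
      by (rule measurable_component_singleton) simp
    moreover have "(\<lambda>f. f 2) \<in> PiM {2::nat} (\<lambda>_. borel) \<rightarrow>\<^sub>M (borel :: real measure)"
      by (rule measurable_component_singleton) simp
    ultimately have "indep_var borel ((\<lambda>f. f 1) \<circ> (\<lambda>\<omega>. restrict (\<lambda>i. ([Lam, Z, R] ! i) \<omega>) {1}))
        borel ((\<lambda>f. f 2) \<circ> (\<lambda>\<omega>. restrict (\<lambda>i. ([Lam, Z, R] ! i) \<omega>) {2}))"
      by (rule indep_var_compose)
    moreover have "(\<lambda>f. f 1) \<circ> (\<lambda>\<omega>. restrict (\<lambda>i. ([Lam, Z, R] ! i) \<omega>) {1}) = Z"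
      by (simp add: fun_eq_iff)
    moreover have "(\<lambda>f. f 2) \<circ> (\<lambda>\<omega>. restrict (\<lambda>i. ([Lam, Z, R] ! i) \<omega>) {2}) = R"
      by (simp add: fun_eq_iff numeral_2_eq_2)
    ultimately show ?thesis by simp
  qed
  show "char (distr M borel (\<lambda>\<omega>. Lam \<omega> * Z \<omega> powr (- 1 / \<alpha>) * sqrt (R \<omega>))) t
           = complex_of_real ((1 + \<bar>t\<bar> powr \<alpha>) powr (- \<nu>))"
  proof (cases "t = 0")
    case True
    have "real_distribution (distr M borel XX)" by (rule real_distribution_distr[OF XXm])
    then have "char (distr M borel XX) 0 = 1" by (rule real_distribution.char_zero)
    then show ?thesis using True unfolding XX_def by simp
  next
    case False
    define c where "c = \<bar>t\<bar> powr \<alpha>"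
    have c: "0 \<le> c" unfolding c_def by simp
    define PL where "PL = distr M borel Lam"
    define PW where "PW = distr M borel W"
    have PLd: "PL = density lborel laplace_density"
    proof -
      have "distr M lborel Lam = density lborel laplace_density"
        using assms(7) unfolding distributed_def by simp
      moreover have "distr M borel Lam = distr M lborel Lam" by (rule distr_cong) simp_all
      ultimately show ?thesis unfolding PL_def by simp
    qed
    have PLp: "prob_space PL" unfolding PL_def using rv(1) by (rule prob_space_distr)
    have PWp: "prob_space PW" unfolding PW_def using Wm by (rule prob_space_distr)
    interpret PL: prob_space PL by (rule PLp)
    interpret PW: prob_space PW by (rule PWp)
    interpret PLW: pair_prob_space PL PW by unfold_locales
    have sPL[measurable_cong]: "sets PL = sets borel" unfolding PL_def by simp
    have sPW[measurable_cong]: "sets PW = sets borel" unfolding PW_def by simp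
    have J1: "PL \<Otimes>\<^sub>M PW = distr M (borel \<Otimes>\<^sub>M borel) (\<lambda>\<omega>. (Lam \<omega>, W \<omega>))"
      using ind1 unfolding indep_var_distribution_eq PL_def PW_def by simp
    have J2: "distr M borel Z \<Otimes>\<^sub>M distr M borel R = distr M (borel \<Otimes>\<^sub>M borel) (\<lambda>\<omega>. (Z \<omega>, R \<omega>))"
      using ind2 unfolding indep_var_distribution_eq by simp
    define g where "g = (\<lambda>q::real \<times> real. iexp (t * (fst q * snd q)))"
    have gm[measurable]: "g \<in> borel_measurable (borel \<Otimes>\<^sub>M borel)" unfolding g_def by measurable
    have "char (distr M borel XX) t = (CLINT \<omega>|M. iexp (t * XX \<omega>))"
      unfolding char_def by (rule integral_distr[OF XXm]) measurable
    also have "\<dots> = (CLINT \<omega>|M. g (Lam \<omega>, W \<omega>))"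
      unfolding g_def XX_def W_def by (simp add: mult.assoc)
    also have "\<dots> = (CLINT q|distr M (borel \<Otimes>\<^sub>M borel) (\<lambda>\<omega>. (Lam \<omega>, W \<omega>)). g q)"
      by (rule integral_distr[symmetric]) (use rv Wm in measurable)
    also have "\<dots> = (CLINT q|PL \<Otimes>\<^sub>M PW. g q)" unfolding J1 ..
    also have "\<dots> = (CLINT w|PW. CLINT l|PL. g (l, w))"
    proof -
      have "complex_integrable (PL \<Otimes>\<^sub>M PW) g"
      proof -
        have fm: "finite_measure (PL \<Otimes>\<^sub>M PW)"
          using prob_space_pair[OF PLp PWp] by (simp add: prob_space_def)
        have sP2: "sets (PL \<Otimes>\<^sub>M PW) = sets (borel \<Otimes>\<^sub>M borel)" by (rule sets_pair_measure_cong; rule sPL sPW)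
        have "g \<in> borel_measurable (PL \<Otimes>\<^sub>M PW)" using gm by (simp add: measurable_cong_sets[OF sP2 refl])
        then show ?thesis
          by (intro finite_measure.integrable_const_bound[OF fm, where B=1]) (auto simp: g_def norm_exp_i_times)
      qed
      then have "complex_integrable (PL \<Otimes>\<^sub>M PW) (\<lambda>(x, y). g (x, y))" by (simp add: case_prod_beta)
      from PLW.integral_snd[OF this] show ?thesis by (simp add: case_prod_beta)
    qed
    also have "\<dots> = (CLINT w|PW. complex_of_real (1 / (1 + (t * w)\<^sup>2)))"
    proof (rule Bochner_Integration.integral_cong[OF refl])
      fix w
      have "(CLINT l|PL. g (l, w)) = (CLINT l|PL. iexp ((t * w) * l))"
        unfolding g_def by (simp add: mult_ac)
      also have "\<dots> = complex_of_real (1 / (1 + (t * w)\<^sup>2))"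
        unfolding PLd by (rule laplace_char) (use PLp PLd in simp)
      finally show "(CLINT l|PL. g (l, w)) = complex_of_real (1 / (1 + (t * w)\<^sup>2))" .
    qed
    also have "\<dots> = complex_of_real (LINT w|PW. 1 / (1 + (t * w)\<^sup>2))"
      by (rule integral_complex_of_real)
    also have "(LINT w|PW. 1 / (1 + (t * w)\<^sup>2)) = enn2real (\<integral>\<^sup>+w. ennreal (1 / (1 + (t * w)\<^sup>2)) \<partial>PW)"
    proof (rule integral_eq_nn_integral)
      show "(\<lambda>w. 1 / (1 + (t * w)\<^sup>2)) \<in> borel_measurable PW"
        unfolding measurable_cong_sets[OF sPW refl] by measurable
      show "AE w in PW. 0 \<le> 1 / (1 + (t * w)\<^sup>2)"
        by (rule AE_I2) (simp add: add_nonneg_nonneg)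
    qed
    also have "(\<integral>\<^sup>+w. ennreal (1 / (1 + (t * w)\<^sup>2)) \<partial>PW) = ennreal ((1 + c) powr (- \<nu>))"
    proof -
      define h where "h = (\<lambda>p::real \<times> real. ennreal (1 / (1 + (t * (fst p powr (- 1 / \<alpha>) * sqrt (snd p)))\<^sup>2)))"
      have hm[measurable]: "h \<in> borel_measurable (borel \<Otimes>\<^sub>M borel)" unfolding h_def by measurable
      have RSp: "prob_space (R_dist S)" using prob_space_distr[OF rv(3)] assms(10) by simp
      interpret RS: prob_space "R_dist S" by (rule RSp)
      have sZ: "sets (Z_dist \<nu>) = sets borel" using assms(8) by (metis sets_distr)
      have sR: "sets (R_dist S) = sets borel" using assms(10) by (metis sets_distr)
      have sZR: "sets (Z_dist \<nu> \<Otimes>\<^sub>M R_dist S) = sets (borel \<Otimes>\<^sub>M borel)"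
        by (rule sets_pair_measure_cong; rule sZ sR)
      have "(\<integral>\<^sup>+w. ennreal (1 / (1 + (t * w)\<^sup>2)) \<partial>PW) = (\<integral>\<^sup>+\<omega>. ennreal (1 / (1 + (t * W \<omega>)\<^sup>2)) \<partial>M)"
        unfolding PW_def by (rule nn_integral_distr[OF Wm]) measurable
      also have "\<dots> = (\<integral>\<^sup>+\<omega>. h (Z \<omega>, R \<omega>) \<partial>M)"
        unfolding h_def W_def by simp
      also have "\<dots> = (\<integral>\<^sup>+p. h p \<partial>distr M (borel \<Otimes>\<^sub>M borel) (\<lambda>\<omega>. (Z \<omega>, R \<omega>)))"
        by (rule nn_integral_distr[symmetric]) (use rv in measurable)
      also have "\<dots> = (\<integral>\<^sup>+p. h p \<partial>(Z_dist \<nu> \<Otimes>\<^sub>M R_dist S))"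
        unfolding J2[symmetric] assms(8) assms(10) ..
      also have "\<dots> = (\<integral>\<^sup>+z. \<integral>\<^sup>+r. h (z, r) \<partial>R_dist S \<partial>Z_dist \<nu>)"
        by (rule RS.nn_integral_fst[symmetric]) (simp add: measurable_cong_sets[OF sZR refl])
      also have "\<dots> = (\<integral>\<^sup>+z. ennreal (1 / (1 + c / z)) \<partial>Z_dist \<nu>)"
      proof (rule nn_integral_cong_AE)
        show "AE z in Z_dist \<nu>. (\<integral>\<^sup>+r. h (z, r) \<partial>R_dist S) = ennreal (1 / (1 + c / z))"
          using Z_dist_pos[OF assms(1,2)]
        proof eventually_elim
          case (elim z)
          show ?case unfolding h_def c_def
            using inner_RZ[OF assms(3) False elim assms(9)] by simp
        qed
      qed
      also have "\<dots> = ennreal ((1 + c) powr (- \<nu>))"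
        by (rule outer_Z[OF assms(1,2) c])
      finally show ?thesis .
    qed
    finally show ?thesis unfolding XX_def c_def by simp
  qed
qed

end
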